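(* Let $(K,C,S)$ be the associated layered complex of a divided simplicial complex $(K,S^0)$. Suppose that $(K,C,S)$ does not admit an intermediate collapse. If $(K',C',S)$ is obtained from $(K,C,S)$ by a $C$-collapse, then $(K',C',S)$ still does not admit an intermediate collapse.
   Context: A simplicial complex $K$ is a set of finite nonempty sets (simplices) closed under passing to nonempty subsets (faces); $K^0$ is its vertex set; $t<s$ means $t$ is a proper face of $s$. A simplex is principal in $K$ if it is not a proper face of any simplex of $K$; $s$ is free in $K$ if it is a proper face of a principal simplex $p$ and of no other simplex of $K$. A layered simplicial complex is $(K,C,S)$ with $C,S$ disjoint subcomplexes; $\mathrm{IM}(K,C,S)$ denotes simplices in neither $C$ nor $S$. A divided simplicial complex is $(K,S^0)$, $S^0\subseteq K^0$; its associated layered complex has $S$ = simplices with all vertices in $S^0$, $C$ = simplices with all vertices in $K^0-S^0$. An elementary $C$-collapse replaces $(K,C,S)$ by $(K-\{s,p\},C-\{s,p\},S)$ where $p\in C$ is principal in $K$ and $s$ is a face of $p$ free in $K$; a $C$-collapse is a finite sequence of these. $(K,C,S)$ (associated to a divided complex) admits an intermediate collapse if there exist simplices $s,p$ with (i) $p\in\mathrm{IM}(K,C,S)$, (ii) $p$ principal in $K$, (iii) $s$ a face of $p$ free in $K$, (iv) every $t\in S$ with $t<p$ satisfies $t<s$. *)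

theory Defs
  imports Main
begin

definition simplicial_complex :: "'a set set \<Rightarrow> bool" where
  "simplicial_complex K \<longleftrightarrow>
     (\<forall>s\<in>K. finite s \<and> s \<noteq> {} \<and> (\<forall>t. t \<subseteq> s \<and> t \<noteq> {} \<longrightarrow> t \<in> K))"

definition subcomplex :: "'a set set \<Rightarrow> 'a set set \<Rightarrow> bool" where
  "subcomplex L K \<longleftrightarrow> L \<subseteq> K \<and> simplicial_complex L"

text \<open>Vertex set K^0: the vertices v with {v} in K, i.e. the union of all simplices.\<close>
definition vertices :: "'a set set \<Rightarrow> 'a set" where
  "vertices K = \<Union>K"

definition principal :: "'a set set \<Rightarrow> 'a set \<Rightarrow> bool" where
  "principal K p \<longleftrightarrow> p \<in> K \<and> \<not> (\<exists>q\<in>K. p \<subset> q)"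

definition free :: "'a set set \<Rightarrow> 'a set \<Rightarrow> bool" where
  "free K s \<longleftrightarrow> (\<exists>p. principal K p \<and> s \<subset> p \<and> (\<forall>q\<in>K. s \<subset> q \<longrightarrow> q = p))"

definition layered_complex :: "'a set set \<Rightarrow> 'a set set \<Rightarrow> 'a set set \<Rightarrow> bool" where
  "layered_complex K C S \<longleftrightarrow> simplicial_complex K \<and> subcomplex C K \<and> subcomplex S K \<and> C \<inter> S = {}"

definition divided_complex :: "'a set set \<Rightarrow> 'a set \<Rightarrow> bool" where
  "divided_complex K S0 \<longleftrightarrow> simplicial_complex K \<and> S0 \<subseteq> vertices K"

definition assoc_S :: "'a set set \<Rightarrow> 'a set \<Rightarrow> 'a set set" where
  "assoc_S K S0 = {s\<in>K. s \<subseteq> S0}"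

definition assoc_C :: "'a set set \<Rightarrow> 'a set \<Rightarrow> 'a set set" where
  "assoc_C K S0 = {s\<in>K. s \<subseteq> vertices K - S0}"

definition IM :: "'a set set \<Rightarrow> 'a set set \<Rightarrow> 'a set set \<Rightarrow> 'a set set" where
  "IM K C S = {s\<in>K. s \<notin> C \<and> s \<notin> S}"

inductive elem_C_collapse ::
  "'a set set \<times> 'a set set \<times> 'a set set \<Rightarrow> 'a set set \<times> 'a set set \<times> 'a set set \<Rightarrow> bool" where
  "\<lbrakk> p \<in> C; principal K p; s \<subseteq> p; free K s \<rbrakk>
   \<Longrightarrow> elem_C_collapse (K, C, S) (K - {s, p}, C - {s, p}, S)"

definition C_collapse ::
  "'a set set \<times> 'a set set \<times> 'a set set \<Rightarrow> 'a set set \<times> 'a set set \<times> 'a set set \<Rightarrow> bool" where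
  "C_collapse = elem_C_collapse\<^sup>*\<^sup>*"

definition admits_intermediate_collapse :: "'a set set \<Rightarrow> 'a set set \<Rightarrow> 'a set set \<Rightarrow> bool" where
  "admits_intermediate_collapse K C S \<longleftrightarrow>
     (\<exists>s p. p \<in> IM K C S \<and> principal K p \<and> s \<subseteq> p \<and> free K s \<and>
            (\<forall>t\<in>S. t \<subset> p \<longrightarrow> t \<subset> s))"

end

theory Submission
  imports Defs
begin

lemma step_back:
  assumes sc: "simplicial_complex K0"
    and sub: "K \<subseteq> K0"
    and Ceq: "C = {t\<in>K. t \<subseteq> \<Union>K0 - S0}"
    and Seq: "S = assoc_S K0 S0"
    and p: "p \<in> C" "principal K p" "s \<subseteq> p" "free K s"
    and adm: "admits_intermediate_collapse (K - {s, p}) (C - {s, p}) S"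
  shows "admits_intermediate_collapse K C S"
proof -
  let ?K' = "K - {s, p}"
  obtain s' p' where ip: "p' \<in> IM ?K' (C - {s,p}) S" and pp: "principal ?K' p'"
    and sp: "s' \<subseteq> p'" and fs: "free ?K' s'" and tc: "\<forall>t\<in>S. t \<subset> p' \<longrightarrow> t \<subset> s'"
    using adm unfolding admits_intermediate_collapse_def by blast
  have p'K: "p' \<in> K" "p' \<noteq> s" "p' \<noteq> p" "p' \<notin> C" "p' \<notin> S" using ip unfolding IM_def by auto
  have pS: "p \<inter> S0 = {}" using p(1) Ceq by auto
  have p'K0: "p' \<in> K0" using p'K sub by auto
  have "p' \<subseteq> \<Union>K0" using p'K0 by auto
  then have "\<not> p' \<subseteq> \<Union>K0 - S0" using p'K Ceq by auto
  then have "\<exists>c. c \<in> p' \<and> c \<in> S0" using \<open>p' \<subseteq> \<Union>K0\<close> by (meson Diff_iff subset_iff)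
  then obtain c where c: "c \<in> p'" "c \<in> S0" by blast
  have "\<forall>t. t \<subseteq> p' \<and> t \<noteq> {} \<longrightarrow> t \<in> K0" using sc p'K0 unfolding simplicial_complex_def by blast
  then have "{c} \<in> K0" using c by blast
  then have cS: "{c} \<in> S" using Seq c unfolding assoc_S_def by auto
  have "{c} \<noteq> p'"
  proof
    assume "{c} = p'"
    then show False using cS p'K by auto
  qed
  then have "{c} \<subset> p'" using c by auto
  then have "{c} \<subset> s'" using tc cS by auto
  then have s'S: "c \<in> s'" by auto
  have nsub: "\<not> s' \<subseteq> p" using s'S c pS by auto
  have ppK: "principal K p'"
    unfolding principal_def
  proof (intro conjI notI)
    show "p' \<in> K" by fact
  next
    assume "\<exists>q\<in>K. p' \<subset> q"
    then obtain q where q: "q \<in> K" "p' \<subset> q" by blast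
    show False
    proof (cases "q \<in> {s, p}")
      case True
      then have "q \<subseteq> p" using p(3) by auto
      then show False using q c pS by auto
    next
      case False
      then show False using pp q unfolding principal_def by auto
    qed
  qed
  obtain p'' where p'': "principal ?K' p''" "s' \<subset> p''" "\<forall>q\<in>?K'. s' \<subset> q \<longrightarrow> q = p''"
    using fs unfolding free_def by blast
  have "s' \<noteq> p'"
  proof
    assume "s' = p'"
    then show False using p'' pp unfolding principal_def by auto
  qed
  then have s'p': "s' \<subset> p'" using sp by auto
  have "p'' = p'" using p''(3) s'p' p'K by auto
  have fK: "free K s'"
    unfolding free_def
  proof (intro exI conjI ballI impI)
    show "principal K p'" by fact
    show "s' \<subset> p'" by fact
  next
    fix q assume q: "q \<in> K" "s' \<subset> q"
    have "q \<notin> {s, p}"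
    proof
      assume "q \<in> {s, p}"
      then have "q \<subseteq> p" using p(3) by auto
      then show False using q nsub by auto
    qed
    then show "q = p'" using p''(3) q \<open>p'' = p'\<close> by auto
  qed
  have "p' \<in> IM K C S" using p'K unfolding IM_def by auto
  then show ?thesis unfolding admits_intermediate_collapse_def
    using ppK sp fK tc by blast
qed

theorem proposition4p17:
  fixes K K' C C' S :: "'a set set" and S0 :: "'a set"
  assumes "divided_complex K S0"
    and "C = assoc_C K S0" and "S = assoc_S K S0"
    and "\<not> admits_intermediate_collapse K C S"
    and "C_collapse (K, C, S) (K', C', S)"
  shows "\<not> admits_intermediate_collapse K' C' S"
proof -
  have sc: "simplicial_complex K" using assms(1) unfolding divided_complex_def by auto
  define P where "P = (\<lambda>(a::'a set set, b::'a set set, c::'a set set).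
     a \<subseteq> K \<and> b = {t\<in>a. t \<subseteq> \<Union>K - S0} \<and> c = S \<and> \<not> admits_intermediate_collapse a b c)"
  have "elem_C_collapse\<^sup>*\<^sup>* (K, C, S) (K', C', S)" using assms(5) unfolding C_collapse_def by simp
  then have "P (K', C', S)"
  proof (induction rule: rtranclp_induct)
    case base
    then show ?case using assms unfolding P_def assoc_C_def vertices_def by auto
  next
    case (step y z)
    from step(2) show ?case
    proof cases
      case (1 p C0 K0 s S1)
      have inv: "K0 \<subseteq> K" "C0 = {t\<in>K0. t \<subseteq> \<Union>K - S0}" "S1 = S"
        "\<not> admits_intermediate_collapse K0 C0 S1"
        using step(3) 1 unfolding P_def by auto
      have "\<not> admits_intermediate_collapse (K0 - {s, p}) (C0 - {s, p}) S"
        using step_back[OF sc inv(1) inv(2) _ 1(3-6)] inv(3,4) assms(3) by auto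
      then show ?thesis using 1 inv unfolding P_def by auto
    qed
  qed
  then show ?thesis unfolding P_def by auto
qed

end
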